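(* If $M$ is a Noetherian commutative monoid, then the terminal space $\mathcal S(M)$ is a Noetherian topological space (every descending chain of closed subsets stabilizes).
   Context: A monoid is a commutative monoid $(M,\cdot,1)$. An ideal of $M$ is a subset $I\subseteq M$ such that $im\in I$ for all $i\in I$, $m\in M$; it is proper if $I\neq M$. $M$ is Noetherian if it satisfies the ascending chain condition on ideals. A proper ideal $K$ of $M$ is strongly irreducible if for all ideals $I,J$ of $M$, $I\cap J\subseteq K$ implies $I\subseteq K$ or $J\subseteq K$. $\mathcal S(M)$ is the set of all strongly irreducible ideals of $M$. For $X\subseteq\mathcal S(M)$, $\mathcal K(X)=\bigcap_{I\in X}I$, and $\mathcal{HK}(X)=\{J\in\mathcal S(M)\mid J\supseteq\mathcal K(X)\}$ if $X\neq\emptyset$, $\mathcal{HK}(\emptyset)=\emptyset$. The terminal space of $M$ is the set $\mathcal S(M)$ with the topology whose closed sets are exactly the sets $\mathcal{HK}(X)$, $X\subseteq\mathcal S(M)$. *)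

theory Defs
  imports "HOL-Analysis.Abstract_Topology"
begin

text \<open>The monoid M is the whole carrier of a type of class comm_monoid_mult.\<close>

definition monoid_ideal :: "'a::comm_monoid_mult set \<Rightarrow> bool" where
  "monoid_ideal I \<longleftrightarrow> (\<forall>i\<in>I. \<forall>m. i * m \<in> I)"

definition noetherian_monoid :: "'a::comm_monoid_mult itself \<Rightarrow> bool" where
  "noetherian_monoid TYPE('a) \<longleftrightarrow>
     (\<forall>f :: nat \<Rightarrow> 'a set. (\<forall>n. monoid_ideal (f n)) \<and> (\<forall>n. f n \<subseteq> f (Suc n))
        \<longrightarrow> (\<exists>N. \<forall>n\<ge>N. f n = f N))"

definition strongly_irreducible :: "'a::comm_monoid_mult set \<Rightarrow> bool" where
  "strongly_irreducible K \<longleftrightarrow> monoid_ideal K \<and> K \<noteq> UNIV \<and>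
     (\<forall>I J. monoid_ideal I \<longrightarrow> monoid_ideal J \<longrightarrow> I \<inter> J \<subseteq> K \<longrightarrow> I \<subseteq> K \<or> J \<subseteq> K)"

definition SI :: "'a::comm_monoid_mult set set" where
  "SI = {K. strongly_irreducible K}"

definition KK :: "'a::comm_monoid_mult set set \<Rightarrow> 'a set" where
  "KK X = \<Inter>X"

definition HK :: "'a::comm_monoid_mult set set \<Rightarrow> 'a set set" where
  "HK X = (if X = {} then {} else {J \<in> SI. KK X \<subseteq> J})"

definition terminal_closed :: "'a::comm_monoid_mult set set \<Rightarrow> bool" where
  "terminal_closed C \<longleftrightarrow> (\<exists>X. X \<subseteq> SI \<and> C = HK X)"

definition terminal_space :: "'a::comm_monoid_mult set topology" where
  "terminal_space = topology (\<lambda>U. U \<subseteq> SI \<and> terminal_closed (SI - U))"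

definition noetherian_space :: "'b topology \<Rightarrow> bool" where
  "noetherian_space T \<longleftrightarrow>
     (\<forall>C :: nat \<Rightarrow> 'b set. (\<forall>n. closedin T (C n)) \<and> (\<forall>n. C (Suc n) \<subseteq> C n)
        \<longrightarrow> (\<exists>N. \<forall>n\<ge>N. C n = C N))"

end

theory Submission
  imports Defs
begin

lemma ideal_Inter_SI:
  assumes "A \<subseteq> (SI :: 'a::comm_monoid_mult set set)"
  shows "monoid_ideal (\<Inter>A)"
  using assms unfolding monoid_ideal_def SI_def strongly_irreducible_def by blast

lemma SI_proper: "J \<in> SI \<Longrightarrow> \<not> UNIV \<subseteq> J"
  unfolding SI_def strongly_irreducible_def by blast

lemma SI_split: "J \<in> SI \<Longrightarrow> monoid_ideal A \<Longrightarrow> monoid_ideal B \<Longrightarrow> A \<inter> B \<subseteq> J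
  \<Longrightarrow> A \<subseteq> J \<or> B \<subseteq> J"
  unfolding SI_def strongly_irreducible_def by blast

lemma closed_iff:
  "terminal_closed (C :: 'a::comm_monoid_mult set set) \<longleftrightarrow>
     C \<subseteq> SI \<and> (\<forall>J\<in>SI. \<Inter>C \<subseteq> J \<longrightarrow> J \<in> C)"
proof
  assume "terminal_closed C"
  then obtain X where X: "X \<subseteq> SI" "C = HK X" unfolding terminal_closed_def by blast
  show "C \<subseteq> SI \<and> (\<forall>J\<in>SI. \<Inter>C \<subseteq> J \<longrightarrow> J \<in> C)"
  proof (cases "X = {}")
    case True
    then show ?thesis using X SI_proper by (auto simp: HK_def)
  next
    case False
    then have C: "C = {J \<in> SI. \<Inter>X \<subseteq> J}" using X by (simp add: HK_def KK_def)
    have "\<Inter>X \<subseteq> \<Inter>C" using C by blast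
    then show ?thesis using C by blast
  qed
next
  assume a: "C \<subseteq> SI \<and> (\<forall>J\<in>SI. \<Inter>C \<subseteq> J \<longrightarrow> J \<in> C)"
  show "terminal_closed C"
  proof (cases "C = {}")
    case True
    then show ?thesis unfolding terminal_closed_def by (auto simp: HK_def)
  next
    case False
    have "C = HK C" using a False by (auto simp: HK_def KK_def)
    then show ?thesis using a unfolding terminal_closed_def by blast
  qed
qed

lemma istop: "istopology (\<lambda>U. U \<subseteq> (SI :: 'a::comm_monoid_mult set set) \<and> terminal_closed (SI - U))"
  unfolding istopology_def
proof (rule conjI; intro allI impI)
  fix S T :: "'a set set"
  assume S: "S \<subseteq> SI \<and> terminal_closed (SI - S)" and T: "T \<subseteq> SI \<and> terminal_closed (SI - T)"
  have eq: "SI - (S \<inter> T) = (SI - S) \<union> (SI - T)" by blast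
  have "terminal_closed ((SI - S) \<union> (SI - T))"
    unfolding closed_iff
  proof (intro conjI ballI impI)
    fix J assume J: "J \<in> SI" "\<Inter>((SI - S) \<union> (SI - T)) \<subseteq> J"
    have iA: "monoid_ideal (\<Inter>(SI - S))" using ideal_Inter_SI[of "SI - S"] by blast
    have iB: "monoid_ideal (\<Inter>(SI - T))" using ideal_Inter_SI[of "SI - T"] by blast
    have "\<Inter>(SI - S) \<inter> \<Inter>(SI - T) \<subseteq> J" using J(2) by auto
    then have "\<Inter>(SI - S) \<subseteq> J \<or> \<Inter>(SI - T) \<subseteq> J"
      using SI_split[OF J(1) iA iB] by blast
    moreover have "\<forall>J\<in>SI. \<Inter>(SI - S) \<subseteq> J \<longrightarrow> J \<in> SI - S" using conjunct2[OF closed_iff[of "SI - S", THEN iffD1, OF conjunct2[OF S]]] .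
    moreover have "\<forall>J\<in>SI. \<Inter>(SI - T) \<subseteq> J \<longrightarrow> J \<in> SI - T" using conjunct2[OF closed_iff[of "SI - T", THEN iffD1, OF conjunct2[OF T]]] .
    ultimately show "J \<in> (SI - S) \<union> (SI - T)"
      using J(1) by blast
  qed blast
  then show "S \<inter> T \<subseteq> SI \<and> terminal_closed (SI - S \<inter> T)" using S eq by (simp add: le_infI1)
next
  fix K :: "'a set set set"
  assume K: "\<forall>S\<in>K. S \<subseteq> SI \<and> terminal_closed (SI - S)"
  have "terminal_closed (SI - \<Union>K)"
    unfolding closed_iff
  proof (intro conjI ballI impI)
    fix J assume J: "J \<in> SI" "\<Inter>(SI - \<Union>K) \<subseteq> J"
    show "J \<in> SI - \<Union>K"
    proof (rule ccontr)
      assume "J \<notin> SI - \<Union>K"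
      then obtain S where S: "S \<in> K" "J \<in> S" using J by blast
      have "\<Inter>(SI - S) \<subseteq> \<Inter>(SI - \<Union>K)" using S by blast
      moreover have "terminal_closed (SI - S)" using K S by blast
      ultimately have H: "\<forall>J\<in>SI. \<Inter>(SI - S) \<subseteq> J \<longrightarrow> J \<in> SI - S" "\<Inter>(SI - S) \<subseteq> J"
        using closed_iff[of "SI - S"] J(2) by auto
      have "J \<in> SI - S" using H J(1) by blast
      then show False using S by blast
    qed
  qed blast
  then show "\<Union>K \<subseteq> SI \<and> terminal_closed (SI - \<Union>K)" using K by blast
qed

lemma openin_ts: "openin (terminal_space :: 'a::comm_monoid_mult set topology) U \<longleftrightarrow>
   U \<subseteq> SI \<and> terminal_closed (SI - U)"
  unfolding terminal_space_def topology_inverse'[OF istop] by (rule refl)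

lemma topspace_ts: "topspace (terminal_space :: 'a::comm_monoid_mult set topology) = SI"
proof -
  have "terminal_closed (SI - (SI :: 'a set set))" unfolding closed_iff using SI_proper by auto
  then have "openin (terminal_space :: 'a set topology) SI" by (simp add: openin_ts)
  then show ?thesis unfolding topspace_def using openin_ts by blast
qed

lemma closedin_ts: "closedin (terminal_space :: 'a::comm_monoid_mult set topology) C
  \<Longrightarrow> C = {J \<in> SI. \<Inter>C \<subseteq> J}"
proof -
  assume "closedin terminal_space C"
  then have "C \<subseteq> SI" "terminal_closed (SI - (SI - C))"
    unfolding closedin_def by (auto simp: topspace_ts openin_ts)
  moreover have "SI - (SI - C) = C" using \<open>C \<subseteq> SI\<close> by blast
  ultimately show ?thesis unfolding closed_iff by auto
qed

theorem proposition2p10: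
  assumes "noetherian_monoid TYPE('a::comm_monoid_mult)"
  shows "noetherian_space (terminal_space :: 'a set topology)"
  unfolding noetherian_space_def
proof (intro allI impI)
  fix C :: "nat \<Rightarrow> 'a set set"
  assume a: "(\<forall>n. closedin terminal_space (C n)) \<and> (\<forall>n. C (Suc n) \<subseteq> C n)"
  have CS: "C n \<subseteq> SI" for n using a closedin_ts by blast
  define f where "f n = \<Inter>(C n)" for n
  have "\<forall>n. monoid_ideal (f n)" unfolding f_def using CS ideal_Inter_SI by blast
  moreover have "\<forall>n. f n \<subseteq> f (Suc n)" unfolding f_def using a by blast
  ultimately obtain N where N: "\<forall>n\<ge>N. f n = f N"
    using assms unfolding noetherian_monoid_def by blast
  show "\<exists>N. \<forall>n\<ge>N. C n = C N"
  proof (intro exI allI impI)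
    fix n assume "n \<ge> N"
    then have "f n = f N" using N by blast
    then show "C n = C N" using closedin_ts[of "C n"] closedin_ts[of "C N"] a
      unfolding f_def by simp
  qed
qed

end
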